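(* Let $d\ge1$ be fixed and let $f$ be a probability density on $\mathbb{R}^d$ with compact support and a unique global mode $x_0$ satisfying, for some constants $0<c_0<C_0$, $h_0>0$, $\beta>0$, $$f(x_0)-C_0\|x-x_0\|^\beta \le f(x)\le f(x_0)-c_0\|x-x_0\|^\beta \text{ for } \|x-x_0\|\le h_0,\qquad f(x)\le f(x_0)-c_0h_0^\beta \text{ for } \|x-x_0\|\ge h_0.$$ For any fixed scale multiplier $b\ge2$ and margin $\kappa\ge0$, the Multi-scale Mode Hunting procedure (described in the context) applied to an i.i.d. sample $X_1,\dots,X_n$ from $f$ runs in expected time linear in $n$.
   Context: $\|x\|=\max_i|x_i|$ is the sup-norm. Multi-scale Mode Hunting with inputs $x_1,\dots,x_n\in\mathbb{R}^d$, $b\ge2$, $\kappa\ge0$: set $s_{\max}=\lfloor \log(n)/(d\log b)\rfloor$ and initialize the active set $I_{\rm active}=\{1,\dots,n\}$. For $s=1,\dots,s_{\max}$: for each $k\in\mathbb{Z}^d$ let $I(k,s)=\{i\in I_{\rm active}: x_i\in[kb^{-s},(k+1)b^{-s})\}$ (coordinatewise half-open hypercube); let $\hat k(s)\in\arg\max_k \#I(k,s)$; update $I_{\rm active}\leftarrow\bigcup\{I(k,s):\|k-\hat k(s)\|\le\kappa\}$. Return $\hat x=\hat k(s_{\max})b^{-s_{\max}}$. Bins containing active points are found by computing $\lfloor x_i b^s\rfloor$ for each active point (time $O(d)$ per point) and accumulating counts in a sparse array. *)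

theory Defs
  imports "HOL-Probability.Probability"
begin

text \<open>Sup-norm on R^d (the type index 'd gives d = CARD('d)).\<close>
definition supn :: "real^'d \<Rightarrow> real" where
  "supn x = Max (range (\<lambda>i. \<bar>x $ i\<bar>))"

text \<open>Bin index floor(x b^s) (coordinatewise) of the half-open cube
  [k b^-s, (k+1) b^-s) containing x.\<close>
definition bin :: "real \<Rightarrow> nat \<Rightarrow> real^'d \<Rightarrow> int^'d" where
  "bin b s x = (\<chi> i. \<lfloor>x $ i * b ^ s\<rfloor>)"

definition cell_count :: "(nat \<Rightarrow> real^'d) \<Rightarrow> real \<Rightarrow> nat \<Rightarrow> nat set \<Rightarrow> int^'d \<Rightarrow> nat" where
  "cell_count X b s A k = card {i \<in> A. bin b s (X i) = k}"

definition mode_bin :: "(nat \<Rightarrow> real^'d) \<Rightarrow> real \<Rightarrow> nat \<Rightarrow> nat set \<Rightarrow> int^'d" where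
  "mode_bin X b s A = (SOME k. \<forall>k'. cell_count X b s A k' \<le> cell_count X b s A k)"

definition next_active :: "(nat \<Rightarrow> real^'d) \<Rightarrow> real \<Rightarrow> real \<Rightarrow> nat \<Rightarrow> nat set \<Rightarrow> nat set" where
  "next_active X b \<kappa> s A =
     {i \<in> A. supn (\<chi> j. real_of_int ((bin b s (X i) - mode_bin X b s A) $ j)) \<le> \<kappa>}"

text \<open>Active set after scales 1..s (s = 0: all indices 0..n-1).\<close>
fun mmh_active :: "(nat \<Rightarrow> real^'d) \<Rightarrow> nat \<Rightarrow> real \<Rightarrow> real \<Rightarrow> nat \<Rightarrow> nat set" where
  "mmh_active X n b \<kappa> 0 = {..<n}"
| "mmh_active X n b \<kappa> (Suc s) = next_active X b \<kappa> (Suc s) (mmh_active X n b \<kappa> s)"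

definition mmh_smax :: "nat \<Rightarrow> nat \<Rightarrow> real \<Rightarrow> nat" where
  "mmh_smax d n b = nat \<lfloor>ln (real n) / (real d * ln b)\<rfloor>"

definition mmh_output :: "(nat \<Rightarrow> real^'d) \<Rightarrow> nat \<Rightarrow> real \<Rightarrow> real \<Rightarrow> real^'d" where
  "mmh_output X n b \<kappa> =
     (let S = mmh_smax CARD('d) n b
      in (\<chi> i. real_of_int (mode_bin X b S (mmh_active X n b \<kappa> (S - 1)) $ i) * b powr (- real S)))"

text \<open>Running time (unit-cost model): O(n) initialization plus, at each scale s,
  O(d) work per point active at the start of scale s (bin computation, sparse
  counting, arg-max over the nonempty bins, and the update).\<close>
definition mmh_cost :: "(nat \<Rightarrow> real^'d) \<Rightarrow> nat \<Rightarrow> real \<Rightarrow> real \<Rightarrow> nat" where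
  "mmh_cost X n b \<kappa> =
     n + (\<Sum>s\<in>{1..mmh_smax CARD('d) n b}. CARD('d) * card (mmh_active X n b \<kappa> (s - 1)))"

end

theory Submission
  imports Defs
begin

lemma supn_ge: "\<bar>x $ i\<bar> \<le> supn x"
  unfolding supn_def by (rule Max_ge) auto

lemma supn_le: "(\<And>i. \<bar>x $ i\<bar> \<le> r) \<Longrightarrow> supn x \<le> r"
  unfolding supn_def by (subst Max_le_iff) auto

lemma supn_meas[measurable]: "supn \<in> borel_measurable borel"
  unfolding supn_def by (rule borel_measurable_Max) auto

lemma active_sub: "mmh_active X n b \<kappa> s \<subseteq> {..<n}"
  by (induction s) (auto simp: next_active_def)

lemma active_pair:
  assumes "i \<in> mmh_active X n b \<kappa> (Suc s)" "j \<in> mmh_active X n b \<kappa> (Suc s)" "b > 0"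
  shows "supn (X i - X j) \<le> (2*\<kappa>+1) / b^(Suc s)"
proof (rule supn_le)
  fix c
  define B where "B = b^(Suc s)"
  have B: "B > 0" using assms(3) by (simp add: B_def)
  define k where "k = mode_bin X b (Suc s) (mmh_active X n b \<kappa> s)"
  have hi: "\<bar>real_of_int (\<lfloor>X i $ c * B\<rfloor> - k $ c)\<bar> \<le> \<kappa>"
    using assms(1) supn_ge[of "\<chi> j. real_of_int ((bin b (Suc s) (X i) - k) $ j)" c]
    by (auto simp: next_active_def bin_def B_def k_def)
  have hj: "\<bar>real_of_int (\<lfloor>X j $ c * B\<rfloor> - k $ c)\<bar> \<le> \<kappa>"
    using assms(2) supn_ge[of "\<chi> i. real_of_int ((bin b (Suc s) (X j) - k) $ i)" c]
    by (auto simp: next_active_def bin_def B_def k_def)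
  have f1: "X i $ c * B - 1 < real_of_int \<lfloor>X i $ c * B\<rfloor>" "real_of_int \<lfloor>X i $ c * B\<rfloor> \<le> X i $ c * B"
    by linarith+
  have f2: "X j $ c * B - 1 < real_of_int \<lfloor>X j $ c * B\<rfloor>" "real_of_int \<lfloor>X j $ c * B\<rfloor> \<le> X j $ c * B"
    by linarith+
  have "\<bar>X i $ c * B - X j $ c * B\<bar> \<le> 2*\<kappa>+1"
    using hi hj f1 f2 by (simp add: abs_le_iff) linarith
  hence "\<bar>X i $ c - X j $ c\<bar> * B \<le> 2*\<kappa>+1"
    using B by (simp add: abs_mult left_diff_distrib[symmetric])
  thus "\<bar>(X i - X j) $ c\<bar> \<le> (2*\<kappa>+1) / b^(Suc s)"
    using B by (simp add: B_def pos_le_divide_eq)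
qed

lemma card_sq_le:
  assumes "finite I" "A \<subseteq> I" "\<And>i j. i \<in> A \<Longrightarrow> j \<in> A \<Longrightarrow> P i j"
  shows "real (card A)^2 \<le> (\<Sum>i\<in>I. \<Sum>j\<in>I. if P i j then 1 else 0)"
proof -
  have fA: "finite A" using assms finite_subset by blast
  have "real (card A)^2 = (\<Sum>i\<in>A. \<Sum>j\<in>A. if P i j then 1 else (0::real))"
    using assms(3) by (simp add: power2_eq_square)
  also have "\<dots> \<le> (\<Sum>i\<in>I. \<Sum>j\<in>A. if P i j then 1 else (0::real))"
    by (rule sum_mono2[OF assms(1,2)]) (auto intro: sum_nonneg)
  also have "\<dots> \<le> (\<Sum>i\<in>I. \<Sum>j\<in>I. if P i j then 1 else (0::real))"
    by (intro sum_mono sum_mono2[OF assms(1,2)]) auto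
  finally show ?thesis .
qed

lemma sqrt_trick:
  fixes c Q t :: real
  assumes "0 \<le> c" "c^2 \<le> Q" "t > 0"
  shows "c \<le> Q/t + t"
proof (cases "c \<le> t")
  case True
  have "0 \<le> Q/t" using assms by (metis divide_nonneg_pos order.trans zero_le_power2)
  then show ?thesis using True by linarith
next
  case False
  hence "c * t \<le> c * c" using assms by (intro mult_left_mono) auto
  also have "\<dots> \<le> Q" using assms by (simp add: power2_eq_square)
  finally have "c \<le> Q / t" using assms by (simp add: pos_le_divide_eq)
  then show ?thesis using assms by linarith
qed

lemma prob_dens:
  fixes f :: "real^'d \<Rightarrow> real"
  assumes "f \<in> borel_measurable borel" "(\<integral>\<^sup>+ x. ennreal (f x) \<partial>lborel) = 1"
  shows "prob_space (density lborel (\<lambda>x. ennreal (f x)))"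
proof (rule prob_spaceI)
  have "emeasure (density lborel (\<lambda>x. ennreal (f x))) UNIV = (\<integral>\<^sup>+ x. ennreal (f x) * indicator UNIV x \<partial>lborel)"
    by (rule emeasure_density) (use assms in auto)
  then show "emeasure (density lborel (\<lambda>x. ennreal (f x))) (space (density lborel (\<lambda>x. ennreal (f x)))) = 1"
    using assms by simp
qed

lemma inner_bound:
  fixes f :: "real^'d \<Rightarrow> real"
  assumes fm: "f \<in> borel_measurable borel" and fF: "\<And>x. f x \<le> F" and r: "0 \<le> r" and F: "0 \<le> F"
  shows "(\<integral>\<^sup>+ y. (if supn (y - z) \<le> r then 1 else 0) \<partial>density lborel (\<lambda>x. ennreal (f x)))
     \<le> ennreal (F * (2*r)^CARD('d))"
proof -
  define l :: "real^'d" where "l = z - (\<chi> i. r)"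
  define u :: "real^'d" where "u = z + (\<chi> i. r)"
  have "(\<integral>\<^sup>+ y. (if supn (y - z) \<le> r then 1 else 0) \<partial>density lborel (\<lambda>x. ennreal (f x)))
     = (\<integral>\<^sup>+ y. ennreal (f y) * (if supn (y - z) \<le> r then 1 else 0) \<partial>lborel)"
    by (rule nn_integral_density) (use fm in auto)
  also have "\<dots> \<le> (\<integral>\<^sup>+ y. ennreal F * indicator (cbox l u) y \<partial>lborel)"
  proof (rule nn_integral_mono)
    fix y :: "real^'d"
    show "ennreal (f y) * (if supn (y - z) \<le> r then 1 else 0) \<le> ennreal F * indicator (cbox l u) y"
    proof (cases "supn (y - z) \<le> r")
      case True
      hence "\<forall>i. \<bar>y$i - z$i\<bar> \<le> r" using supn_ge[of "y - z"] by (metis order.trans vector_minus_component)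
      hence "y \<in> cbox l u" unfolding mem_box_cart l_def u_def
      proof (intro allI)
        fix i assume h: "\<forall>i. \<bar>y$i - z$i\<bar> \<le> r"
        show "(z - (\<chi> i. r)) $ i \<le> y $ i \<and> y $ i \<le> (z + (\<chi> i. r)) $ i"
          using h[rule_format, of i] by (simp add: abs_le_iff)
      qed
      then show ?thesis using True fF[of y] by (simp add: ennreal_leI)
    qed simp
  qed
  also have "\<dots> = ennreal F * emeasure lborel (cbox l u)"
    by (rule nn_integral_cmult_indicator) simp
  also have "emeasure lborel (cbox l u) = (\<Prod>b\<in>(Basis::(real^'d) set). 2*r)"
  proof -
    have "\<forall>b\<in>(Basis::(real^'d) set). l \<bullet> b \<le> u \<bullet> b \<and> (u - l) \<bullet> b = 2*r"
      using r by (auto simp: Basis_vec_def inner_axis l_def u_def)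
    then show ?thesis by (simp add: emeasure_lborel_cbox_eq cong: prod.cong)
  qed
  also have "(\<Prod>b\<in>(Basis::(real^'d) set). 2*r) = (2*r)^CARD('d)"
    by simp
  finally have "(\<integral>\<^sup>+ y. (if supn (y - z) \<le> r then 1 else 0) \<partial>density lborel (\<lambda>x. ennreal (f x)))
     \<le> ennreal F * ennreal ((2*r)^CARD('d))" .
  also have "\<dots> = ennreal (F * (2*r)^CARD('d))"
    using r F by (intro ennreal_mult[symmetric]) auto
  finally show ?thesis .
qed

lemma ind_meas:
  fixes M :: "(real^'d) measure"
  assumes sM: "sets M = sets borel" and I: "i \<in> I" "j \<in> I"
  shows "(\<lambda>X. if supn (X i - X j) \<le> r then (1::'b::{zero,one,topological_space}) else 0) \<in> borel_measurable (PiM I (\<lambda>_. M))"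
proof -
  have h1: "(\<lambda>X. X i) \<in> borel_measurable (PiM I (\<lambda>_. (borel :: (real^'d) measure)))"
    by (rule measurable_component_singleton) (simp add: I)
  have h2: "(\<lambda>X. X j) \<in> borel_measurable (PiM I (\<lambda>_. (borel :: (real^'d) measure)))"
    by (rule measurable_component_singleton) (simp add: I)
  have h3: "(\<lambda>X. supn (X i - X j)) \<in> borel_measurable (PiM I (\<lambda>_. (borel :: (real^'d) measure)))"
    using measurable_compose[OF borel_measurable_diff[OF h1 h2] supn_meas] .
  have "(\<lambda>X. if supn (X i - X j) \<le> r then (1::'b) else 0) \<in> borel_measurable (PiM I (\<lambda>_. (borel :: (real^'d) measure)))"
    by (rule measurable_If) (use pred_le_const[OF h3, of r] in \<open>auto simp: pred_def\<close>)
  moreover have S: "sets (PiM I (\<lambda>_. M)) = sets (PiM I (\<lambda>_. (borel :: (real^'d) measure)))"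
    by (intro sets_PiM_cong refl sM)
  ultimately show ?thesis
    by (simp only: measurable_cong_sets[OF S refl])
qed

lemma pair_bound:
  fixes M :: "(real^'d) measure"
  assumes PM: "prob_space M" and sM: "sets M = sets borel" and I: "finite I" "i \<in> I" "j \<in> I" "i \<noteq> j"
   and inner: "\<And>z. (\<integral>\<^sup>+ y. (if supn (y - z) \<le> r then 1 else 0) \<partial>M) \<le> c"
  shows "(\<integral>\<^sup>+ X. (if supn (X i - X j) \<le> r then 1 else 0) \<partial>PiM I (\<lambda>_. M)) \<le> c"
proof -
  interpret product_prob_space "\<lambda>_. M"
    using PM by (simp add: product_prob_space_def product_prob_space_axioms_def
        product_sigma_finite_def prob_space_imp_sigma_finite)
  have II: "I = insert i (I - {i})" using I by auto
  have meas: "(\<lambda>X. if supn (X i - X j) \<le> r then 1 else 0 :: ennreal) \<in> borel_measurable (PiM (insert i (I - {i})) (\<lambda>_. M))"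
  using ind_meas[OF sM I(2,3)] by (simp only: II[symmetric])
  have "(\<integral>\<^sup>+ X. (if supn (X i - X j) \<le> r then 1 else 0) \<partial>PiM I (\<lambda>_. M))
      = (\<integral>\<^sup>+ X. (if supn (X i - X j) \<le> r then 1 else 0) \<partial>PiM (insert i (I - {i})) (\<lambda>_. M))"
    by (simp only: II[symmetric])
  also have "\<dots> = (\<integral>\<^sup>+ x. (\<integral>\<^sup>+ y. (if supn ((x(i := y)) i - (x(i := y)) j) \<le> r then 1 else 0) \<partial>M) \<partial>PiM (I - {i}) (\<lambda>_. M))"
    by (rule product_nn_integral_insert) (use I meas in auto)
  also have "\<dots> \<le> (\<integral>\<^sup>+ x. c \<partial>PiM (I - {i}) (\<lambda>_. M))"
    by (rule nn_integral_mono) (use I inner in simp)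
  also have "\<dots> = c"
  proof -
    interpret Q: prob_space "PiM (I - {i}) (\<lambda>_. M)" by (rule prob_space_PiM) (rule PM)
    show ?thesis by (simp add: Q.emeasure_space_1)
  qed
  finally show ?thesis .
qed

lemma supn_zero: "supn (0::real^'d) = 0"
  unfolding supn_def by simp

lemma ennreal_ind: "ennreal (if P then 1 else 0) = (if P then 1 else 0)"
  by simp


lemma EQ_bound:
  fixes M :: "(real^'d) measure"
  assumes PM: "prob_space M" and sM: "sets M = sets borel" and I: "finite I" and r: "0 \<le> r" and c: "0 \<le> c"
   and inner: "\<And>z. (\<integral>\<^sup>+ y. (if supn (y - z) \<le> r then 1 else 0) \<partial>M) \<le> ennreal c"
  shows "(\<integral>\<^sup>+ X. ennreal (\<Sum>i\<in>I. \<Sum>j\<in>I. if supn (X i - X j) \<le> r then 1 else 0) \<partial>PiM I (\<lambda>_. M))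
     \<le> ennreal (real (card I) + real (card I)^2 * c)"
proof -
  interpret Q: prob_space "PiM I (\<lambda>_. M)" by (rule prob_space_PiM) (rule PM)
  have "(\<integral>\<^sup>+ X. ennreal (\<Sum>i\<in>I. \<Sum>j\<in>I. if supn (X i - X j) \<le> r then 1 else 0) \<partial>PiM I (\<lambda>_. M))
      = (\<integral>\<^sup>+ X. (\<Sum>i\<in>I. \<Sum>j\<in>I. (if supn (X i - X j) \<le> r then 1 else 0 :: ennreal)) \<partial>PiM I (\<lambda>_. M))"
  proof (rule nn_integral_cong)
    fix X :: "'a \<Rightarrow> real^'d"
    have "ennreal (\<Sum>i\<in>I. \<Sum>j\<in>I. if supn (X i - X j) \<le> r then 1 else 0)
        = (\<Sum>i\<in>I. ennreal (\<Sum>j\<in>I. if supn (X i - X j) \<le> r then 1 else 0))"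
      by (rule sum_ennreal[symmetric]) (auto intro: sum_nonneg)
    also have "\<dots> = (\<Sum>i\<in>I. \<Sum>j\<in>I. ennreal (if supn (X i - X j) \<le> r then 1 else 0))"
      by (intro sum.cong refl sum_ennreal[symmetric]) auto
    finally show "ennreal (\<Sum>i\<in>I. \<Sum>j\<in>I. if supn (X i - X j) \<le> r then 1 else 0)
        = (\<Sum>i\<in>I. \<Sum>j\<in>I. (if supn (X i - X j) \<le> r then 1 else 0 :: ennreal))"
      by (simp only: ennreal_ind)
  qed
  also have "\<dots> = (\<Sum>i\<in>I. \<Sum>j\<in>I. (\<integral>\<^sup>+ X. (if supn (X i - X j) \<le> r then 1 else 0 :: ennreal) \<partial>PiM I (\<lambda>_. M)))"
    apply (subst nn_integral_sum)
     apply (intro borel_measurable_sum ind_meas[OF sM]; assumption)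
    apply (intro sum.cong refl nn_integral_sum ind_meas[OF sM]; assumption)
    done
  also have "\<dots> \<le> (\<Sum>i\<in>I. \<Sum>j\<in>I. ennreal (if i = j then 1 else c))"
  proof (rule sum_mono, rule sum_mono)
    fix i j assume ij: "i \<in> I" "j \<in> I"
    show "(\<integral>\<^sup>+ X. (if supn (X i - X j) \<le> r then 1 else 0 :: ennreal) \<partial>PiM I (\<lambda>_. M)) \<le> ennreal (if i = j then 1 else c)"
    proof (cases "i = j")
      case True
      have e: "\<And>X. (if supn (X i - X j) \<le> r then 1 else 0 :: ennreal) = 1" using r True by (simp add: supn_zero)
      have "(\<integral>\<^sup>+ X. (if supn (X i - X j) \<le> r then 1 else 0 :: ennreal) \<partial>PiM I (\<lambda>_. M)) = (\<integral>\<^sup>+ X. 1 \<partial>PiM I (\<lambda>_. M))"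
        by (simp only: e)
      also have "\<dots> = 1" using Q.emeasure_space_1 by (simp only: nn_integral_const mult_1)
      also have "1 = ennreal (if i = j then 1 else c)" using True by simp
      finally show ?thesis by (rule eq_refl)
    next
      case False
      have "(if i = j then 1 else c) = c" using False by simp
      then show ?thesis using pair_bound[OF PM sM I ij False inner] by (simp only:)
    qed
  qed
  also have "\<dots> = ennreal (\<Sum>i\<in>I. \<Sum>j\<in>I. (if i = j then 1 else c))"
  proof -
    have "(\<Sum>i\<in>I. \<Sum>j\<in>I. ennreal (if i = j then 1 else c)) = (\<Sum>i\<in>I. ennreal (\<Sum>j\<in>I. (if i = j then 1 else c)))"
      using c by (intro sum.cong refl sum_ennreal) auto
    also have "\<dots> = ennreal (\<Sum>i\<in>I. \<Sum>j\<in>I. (if i = j then 1 else c))"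
      using c by (intro sum_ennreal sum_nonneg) auto
    finally show ?thesis .
  qed
  also have "\<dots> \<le> ennreal (real (card I) + real (card I)^2 * c)"
  proof (rule ennreal_leI)
    have "(\<Sum>i\<in>I. \<Sum>j\<in>I. (if i = j then 1 else c)) \<le> (\<Sum>i\<in>I. \<Sum>j\<in>I. ((if i = j then 1 else 0) + c))"
      using c by (intro sum_mono) auto
    also have "\<dots> = (\<Sum>i\<in>I. (1 + real (card I) * c))"
      using I by (intro sum.cong refl) (simp add: sum.distrib)
    also have "\<dots> = real (card I) + real (card I)^2 * c"
      by (simp add: power2_eq_square algebra_simps)
    finally show "(\<Sum>i\<in>I. \<Sum>j\<in>I. (if i = j then 1 else c)) \<le> real (card I) + real (card I)^2 * c" .
  qed
  finally show ?thesis .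
qed


lemma geom1:
  fixes a :: real assumes "a > 1" shows "(\<Sum>s<S. a^s) \<le> a^S / (a - 1)"
proof -
  have "(\<Sum>s<S. a^s) = (1 - a^S) / (1 - a)" using assms by (simp add: sum_gp_strict)
  also have "\<dots> = (a^S - 1) / (a - 1)" by (metis minus_diff_eq minus_divide_divide)
  also have "\<dots> \<le> a^S / (a - 1)" using assms by (intro divide_right_mono) auto
  finally show ?thesis .
qed

lemma geom2:
  fixes a :: real assumes "a > 1" shows "(\<Sum>s<S. (1/a)^s) \<le> a / (a - 1)"
proof -
  have q: "1/a < 1" "0 < 1/a" using assms by auto
  have "(\<Sum>s<S. (1/a)^s) = (1 - (1/a)^S) / (1 - 1/a)" using q by (simp add: sum_gp_strict)
  also have "\<dots> \<le> 1 / (1 - 1/a)" using q by (intro divide_right_mono) auto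
  also have "\<dots> = a / (a - 1)" using assms by (simp add: field_simps)
  finally show ?thesis .
qed

lemma pow_smax_le:
  fixes b :: real assumes b: "b \<ge> 2" and n: "n \<ge> 1" and d: "d \<ge> 1"
  shows "b ^ (d * mmh_smax d n b) \<le> real n"
proof -
  define S where "S = mmh_smax d n b"
  have lb: "ln b > 0" using b by simp
  have "real S \<le> ln (real n) / (real d * ln b)"
  proof -
    have "0 \<le> ln (real n) / (real d * ln b)" using n d lb by (intro divide_nonneg_nonneg) auto
    then show ?thesis unfolding S_def mmh_smax_def by linarith
  qed
  hence "real S * (real d * ln b) \<le> ln (real n)" using lb d by (simp add: pos_le_divide_eq)
  hence l: "ln (b ^ (d * S)) \<le> ln (real n)" using b by (simp add: ln_realpow algebra_simps)
  have pos: "0 < b ^ (d * S)" "0 < real n" using b n by auto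
  have "b ^ (d * S) \<le> real n" using l by (simp only: ln_le_cancel_iff[OF pos])
  thus ?thesis by (simp only: S_def)
qed


theorem proposition1:
  fixes f :: "real^'d \<Rightarrow> real" and x0 :: "real^'d"
    and c0 C0 h0 \<beta> b \<kappa> :: real
  assumes f_meas: "f \<in> borel_measurable borel"
    and f_nonneg: "\<forall>x. 0 \<le> f x"
    and f_int: "(\<integral>\<^sup>+ x. ennreal (f x) \<partial>lborel) = 1"
    and f_supp: "compact (closure {x. f x \<noteq> 0})"
    and c0: "0 < c0" and c0C0: "c0 < C0" and h0: "0 < h0" and beta: "0 < \<beta>"
    and mode: "\<forall>x. f x \<le> f x0" and mode_unique: "\<forall>x. x \<noteq> x0 \<longrightarrow> f x < f x0"
    and near: "\<forall>x. supn (x - x0) \<le> h0 \<longrightarrow>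
                 f x0 - C0 * supn (x - x0) powr \<beta> \<le> f x \<and> f x \<le> f x0 - c0 * supn (x - x0) powr \<beta>"
    and far: "\<forall>x. supn (x - x0) \<ge> h0 \<longrightarrow> f x \<le> f x0 - c0 * h0 powr \<beta>"
    and b: "b \<ge> 2" and kappa: "\<kappa> \<ge> 0"
  shows "\<exists>C. \<forall>n\<ge>1.
    (\<integral>\<^sup>+ X. ennreal (real (mmh_cost X n b \<kappa>))
        \<partial>(PiM {..<n} (\<lambda>_. density lborel (\<lambda>x. ennreal (f x)))))
      \<le> ennreal (C * real n)"
proof -
  define d where "d = CARD('d)"
  define M where "M = density lborel (\<lambda>x. ennreal (f x))"
  define F where "F = f x0"
  have F0: "0 \<le> F" using f_nonneg by (simp add: F_def)
  have fF: "\<And>x. f x \<le> F" using mode by (simp add: F_def)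
  have PM: "prob_space M" using prob_dens[OF f_meas f_int] by (simp add: M_def)
  have sM: "sets M = sets borel" by (simp add: M_def)
  define K where "K = F * (2*(2*\<kappa>+1))^d"
  have K0: "0 \<le> K" using F0 kappa by (simp add: K_def)
  have d1: "d \<ge> 1" by (simp add: d_def Suc_le_eq)
  define a where "a = sqrt b ^ d"
  have sb: "sqrt 2 \<le> sqrt b" using b by simp
  have s2: "4/3 \<le> sqrt (2::real)" by (rule real_le_rsqrt) (simp add: power2_eq_square)
  have "sqrt b ^ 1 \<le> sqrt b ^ d" using d1 sb s2 by (intro power_increasing) auto
  hence "sqrt b \<le> a" by (simp only: power_one_right a_def)
  hence a_ge: "4/3 \<le> a" using sb s2 by linarith
  have a1: "a > 1" using a_ge by simp
  have a3: "1/(a-1) \<le> 3" using a_ge by (simp add: field_simps)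
  have a4: "a/(a-1) \<le> 4" using a_ge by (simp add: field_simps)
  have "a^2 = sqrt b ^ (d*2)" by (simp only: a_def power_mult)
  also have "\<dots> = (sqrt b ^ 2)^d" by (simp only: mult.commute[of d 2] power_mult)
  also have "\<dots> = b^d" using b by simp
  finally have a2b: "a^2 = b^d" .
  show ?thesis
  proof (rule exI[of _ "1 + 3*real d + 4*real d*(K+1)"], intro allI impI)
    fix n :: nat assume n: "n \<ge> 1"
    define S where "S = mmh_smax d n b"
    define PP where "PP = PiM {..<n} (\<lambda>_. M)"
    define r where "r s = (2*\<kappa>+1)/b^s" for s :: nat
    define Q where "Q s X = (\<Sum>i\<in>{..<n}. \<Sum>j\<in>{..<n}. if supn (X i - X j) \<le> r s then 1 else 0 :: real)" for s and X :: "nat \<Rightarrow> real^'d"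
    define t where "t s = real n / a^s" for s :: nat
    define B where "B s X = (if s = 0 then real n else Q s X / t s + t s)" for s and X :: "nat \<Rightarrow> real^'d"
    define g where "g s = a^s + real n * (K+1) / a^s" for s :: nat
    have tpos: "t s > 0" for s using n a1 by (simp add: t_def)
    have rpos: "r s \<ge> 0" for s using kappa b by (simp add: r_def)
    have Q0: "Q s X \<ge> 0" for s and X :: "nat \<Rightarrow> real^'d" unfolding Q_def by (intro sum_nonneg) auto
    have B0: "B s X \<ge> 0" for s and X :: "nat \<Rightarrow> real^'d" using Q0[of s X] tpos[of s] by (simp add: B_def)
    have card_le: "real (card (mmh_active X n b \<kappa> s)) \<le> B s X" for X :: "nat \<Rightarrow> real^'d" and s
    proof (cases s)
      case 0
      then show ?thesis by (simp add: B_def)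
    next
      case (Suc s')
      have "real (card (mmh_active X n b \<kappa> s))^2 \<le> Q s X"
        unfolding Q_def Suc
      proof (rule card_sq_le[OF finite_lessThan active_sub])
        fix i j assume "i \<in> mmh_active X n b \<kappa> (Suc s')" "j \<in> mmh_active X n b \<kappa> (Suc s')"
        then show "supn (X i - X j) \<le> r (Suc s')" unfolding r_def using b by (intro active_pair) auto
      qed
      then have "real (card (mmh_active X n b \<kappa> s)) \<le> Q s X / t s + t s"
        by (intro sqrt_trick tpos) auto
      then show ?thesis using Suc by (simp add: B_def)
    qed
    have cost_le: "real (mmh_cost X n b \<kappa>) \<le> real n + real d * (\<Sum>s<S. B s X)" for X :: "nat \<Rightarrow> real^'d"
    proof -
      have "mmh_cost X n b \<kappa> = n + (\<Sum>s<S. d * card (mmh_active X n b \<kappa> s))"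
        unfolding mmh_cost_def d_def[symmetric] S_def[symmetric]
        using sum.atLeast1_atMost_eq[of "\<lambda>s. d * card (mmh_active X n b \<kappa> (s - 1))" S] by simp
      hence "real (mmh_cost X n b \<kappa>) = real n + real d * (\<Sum>s<S. real (card (mmh_active X n b \<kappa> s)))"
        by (simp add: sum_distrib_left)
      also have "\<dots> \<le> real n + real d * (\<Sum>s<S. B s X)"
        using card_le by (intro add_left_mono mult_left_mono sum_mono) auto
      finally show ?thesis .
    qed
    have Qm: "Q s \<in> borel_measurable PP" for s
      unfolding Q_def PP_def by (intro borel_measurable_sum ind_meas[OF sM]) auto
    have Bm: "(\<lambda>X. ennreal (B s X)) \<in> borel_measurable PP" for s
    proof (cases "s = 0")
      case True then show ?thesis by (simp add: B_def)
    next
      case False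
      have [measurable]: "Q s \<in> borel_measurable PP" by (rule Qm)
      show ?thesis using False unfolding B_def by measurable
    qed
    interpret P: prob_space PP unfolding PP_def by (rule prob_space_PiM) (rule PM)
    have EB: "(\<integral>\<^sup>+X. ennreal (B s X) \<partial>PP) \<le> ennreal (g s)" for s
    proof (cases "s = 0")
      case True
      have "(\<integral>\<^sup>+X. ennreal (B s X) \<partial>PP) = ennreal (real n)"
        using True P.emeasure_space_1 by (simp add: B_def)
      also have "\<dots> \<le> ennreal (g s)"
      proof (rule ennreal_leI)
        have "0 \<le> real n * K" using K0 by simp
        thus "real n \<le> g s" using True by (simp add: g_def distrib_left)
      qed
      finally show ?thesis .
    next
      case False
      define c where "c = F * (2 * r s)^d"
      have c0: "0 \<le> c" using F0 rpos[of s] by (simp add: c_def)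
      have cK: "c = K / (a^s * a^s)"
      proof -
        have "(2 * r s)^d = (2*(2*\<kappa>+1))^d / (b^s)^d"
          by (simp add: r_def power_divide)
        also have "(b^s)^d = (b^d)^s" by (metis power_mult mult.commute)
        also have "(b^d)^s = a^s * a^s" by (simp add: a2b[symmetric] power2_eq_square power_mult_distrib)
        finally show ?thesis by (simp add: c_def K_def)
      qed
      have inner: "(\<integral>\<^sup>+ y. (if supn (y - z) \<le> r s then 1 else 0) \<partial>M) \<le> ennreal c" for z
        unfolding M_def c_def d_def using inner_bound[OF f_meas fF rpos F0] .
      have EQ: "(\<integral>\<^sup>+ X. ennreal (Q s X) \<partial>PP) \<le> ennreal (real n + real n^2 * c)"
        using EQ_bound[OF PM sM finite_lessThan rpos c0 inner] unfolding Q_def PP_def by simp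
      have "(\<integral>\<^sup>+X. ennreal (B s X) \<partial>PP) = (\<integral>\<^sup>+X. ennreal (1 / t s) * ennreal (Q s X) + ennreal (t s) \<partial>PP)"
      proof (rule nn_integral_cong)
        fix X
        have "ennreal (Q s X / t s + t s) = ennreal (1 / t s * Q s X) + ennreal (t s)"
          using Q0[of s X] tpos[of s] by (subst ennreal_plus) auto
        also have "\<dots> = ennreal (1 / t s) * ennreal (Q s X) + ennreal (t s)"
          using Q0[of s X] tpos[of s] ennreal_mult[of "1 / t s" "Q s X"] by simp
        finally show "ennreal (B s X) = ennreal (1 / t s) * ennreal (Q s X) + ennreal (t s)"
          using False by (simp add: B_def)
      qed
      also have "\<dots> = ennreal (1 / t s) * (\<integral>\<^sup>+X. ennreal (Q s X) \<partial>PP) + ennreal (t s)"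
        using Qm[of s] P.emeasure_space_1 by (simp add: nn_integral_add nn_integral_cmult)
      also have "\<dots> \<le> ennreal (1 / t s) * ennreal (real n + real n^2 * c) + ennreal (t s)"
        by (rule add_right_mono, rule mult_left_mono[OF EQ]) simp
      also have "\<dots> = ennreal (1 / t s * (real n + real n^2 * c) + t s)"
      proof -
        have A0: "0 \<le> real n + real n^2 * c" using c0 by simp
        have t0: "0 \<le> 1 / t s" "0 \<le> t s" using tpos[of s] by auto
        have m0: "0 \<le> 1 / t s * (real n + real n^2 * c)" using A0 t0 by simp
        show ?thesis
          by (simp only: ennreal_mult[OF t0(1) A0, symmetric] ennreal_plus[OF m0 t0(2), symmetric])
      qed
      also have "1 / t s * (real n + real n^2 * c) + t s = g s"
        using n a1 unfolding cK t_def g_def by (simp add: field_simps power2_eq_square)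
      finally show ?thesis .
    qed
    have "(\<integral>\<^sup>+ X. ennreal (real (mmh_cost X n b \<kappa>)) \<partial>PP)
        \<le> (\<integral>\<^sup>+ X. ennreal (real n) + ennreal (real d) * (\<Sum>s<S. ennreal (B s X)) \<partial>PP)"
    proof (rule nn_integral_mono)
      fix X
      have "ennreal (real (mmh_cost X n b \<kappa>)) \<le> ennreal (real n + real d * (\<Sum>s<S. B s X))"
        by (rule ennreal_leI) (rule cost_le)
      also have "\<dots> = ennreal (real n) + ennreal (real d) * (\<Sum>s<S. ennreal (B s X))"
        using B0 by (simp add: ennreal_plus ennreal_mult sum_nonneg)
      finally show "ennreal (real (mmh_cost X n b \<kappa>)) \<le> ennreal (real n) + ennreal (real d) * (\<Sum>s<S. ennreal (B s X))" .
    qed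
    also have "\<dots> = ennreal (real n) + ennreal (real d) * (\<Sum>s<S. (\<integral>\<^sup>+ X. ennreal (B s X) \<partial>PP))"
      using Bm P.emeasure_space_1
      by (simp add: nn_integral_add nn_integral_cmult nn_integral_sum borel_measurable_sum)
    also have "\<dots> \<le> ennreal (real n) + ennreal (real d) * (\<Sum>s<S. ennreal (g s))"
      by (intro add_left_mono mult_left_mono sum_mono EB) auto
    also have "\<dots> = ennreal (real n + real d * (\<Sum>s<S. g s))"
    proof -
      have g0: "0 \<le> g s" for s using a1 K0 by (simp add: g_def)
      then show ?thesis by (simp add: ennreal_plus ennreal_mult sum_nonneg)
    qed
    also have "\<dots> \<le> ennreal ((1 + 3*real d + 4*real d*(K+1)) * real n)"
    proof (rule ennreal_leI)
      have aS: "a^S \<le> real n"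
      proof -
        have "a^S = sqrt b ^ (d*S)" by (simp add: a_def power_mult)
        also have "\<dots> \<le> b ^ (d*S)"
        proof (rule power_mono)
          have "1 \<le> sqrt b" using b by simp
          hence "sqrt b * 1 \<le> sqrt b * sqrt b" by (intro mult_left_mono) auto
          thus "sqrt b \<le> b" using b by simp
        qed (use b in simp)
        also have "\<dots> \<le> real n" unfolding S_def using pow_smax_le[OF b n d1] .
        finally show ?thesis .
      qed
      have "(\<Sum>s<S. g s) = (\<Sum>s<S. a^s) + real n * (K+1) * (\<Sum>s<S. (1/a)^s)"
        unfolding g_def by (simp add: sum.distrib sum_distrib_left power_one_over divide_inverse power_inverse)
      also have "\<dots> \<le> a^S/(a-1) + real n * (K+1) * (a/(a-1))"
        using K0 geom1[OF a1] geom2[OF a1] by (intro add_mono mult_left_mono) auto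
      also have "\<dots> \<le> 3 * real n + real n * (K+1) * 4"
      proof (intro add_mono mult_left_mono)
        have "a^S/(a-1) = a^S * (1/(a-1))" by simp
        also have "\<dots> \<le> real n * 3" using aS a3 a1 by (intro mult_mono) auto
        finally show "a^S/(a-1) \<le> 3 * real n" by simp
      qed (use a4 K0 in auto)
      finally have "(\<Sum>s<S. g s) \<le> 3 * real n + real n * (K+1) * 4" .
      hence "real d * (\<Sum>s<S. g s) \<le> real d * (3 * real n + real n * (K+1) * 4)"
        by (intro mult_left_mono) auto
      thus "real n + real d * (\<Sum>s<S. g s) \<le> (1 + 3*real d + 4*real d*(K+1)) * real n"
        by (simp add: algebra_simps)
    qed
    finally show "(\<integral>\<^sup>+ X. ennreal (real (mmh_cost X n b \<kappa>))
        \<partial>(PiM {..<n} (\<lambda>_. density lborel (\<lambda>x. ennreal (f x)))))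
      \<le> ennreal ((1 + 3*real d + 4*real d*(K+1)) * real n)"
      unfolding PP_def M_def .
  qed
qed

end
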